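(* Let $\mathscr T^\otimes=(V,\mathcal E^\otimes)$ be the tensor product of rooted directed trees $\mathscr T_1,\dots,\mathscr T_d$, let $\mathscr T^\otimes_{\mathsf{root}}=(V^\otimes,\mathcal F)$ be the component of $\mathscr T^\otimes$ containing $\mathsf{root}=(\mathsf{root}_1,\dots,\mathsf{root}_d)$, let $\mathscr T$ be the directed Cartesian product of $\mathscr T_1,\dots,\mathscr T_d$, and let $\mathsf{Root}^\otimes=\{\mathfrak v\in V:\mathfrak v_j=\mathsf{root}_j\text{ for at least one }j\}$. Then: (i) if $\mathfrak v\in\mathsf{Root}^\otimes$, there is no $\mathfrak u\in V$ with $(\mathfrak u,\mathfrak v)\in\mathcal E^\otimes$; (ii) for each $\mathfrak v\in V\setminus\mathsf{Root}^\otimes$ there is a unique $\mathfrak u\in V$ with $(\mathfrak u,\mathfrak v)\in\mathcal E^\otimes$; (iii) $\mathscr T^\otimes$ has no circuits; (iv) no two distinct vertices of $\mathsf{Root}^\otimes$ can be connected by a path in $\mathscr T^\otimes$; (v) there is a bijective correspondence between the components of $\mathscr T^\otimes$ and the elements of $\mathsf{Root}^\otimes$; in particular $\mathscr T^\otimes$ has countably many components; (vi) each component is a rooted directed tree whose root lies in $\mathsf{Root}^\otimes$; (vii) $\mathscr T^\otimes$ is locally finite if and only if $\mathscr T$ is locally finite; (viii) $\mathscr T^\otimes$ is leafless; (ix) if each $\mathscr T_j$ has finite branching index $k_{\mathscr T_j}$, then the branching index of $\mathscr T^\otimes_{\mathsf{root}}$ equals $\max\{k_{\mathscr T_j}:1\le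 j\le d\}$; (x) for each $v\in V$ there exists $\mathfrak v\in V^\otimes$ such that $|\alpha_v|=\alpha_{\mathfrak v}$, where $\alpha_v$ is the depth of $v$ in $\mathscr T$ and $\alpha_{\mathfrak v}$ the depth of $\mathfrak v$ in the directed tree $\mathscr T^\otimes_{\mathsf{root}}$.
   Context: Directed graph: $(V,\mathcal E)$, $\mathcal E\subseteq V\times V$ without loops; circuits and paths as usual (a path joins two vertices by a sequence of distinct vertices with consecutive ones joined by an edge in either direction). A directed tree is connected, has no circuits, and every vertex with an incoming edge has exactly one (parent $\mathsf{par}(v)$); rooted: a (unique) vertex $\mathsf{root}$ without incoming edge. $\mathsf{Chi}(u)=\{v:(u,v)\in\mathcal E\}$; locally finite: all $\mathsf{Chi}(u)$ finite; leafless: all $\mathsf{Chi}(u)\ne\emptyset$; all directed trees are assumed leafless. Depth of $u$ in a rooted tree: $n$ with $u\in\mathsf{Chi}^n(\mathsf{root})$. Branching index: $1+\sup\{\text{depth}(w):\mathrm{card}\,\mathsf{Chi}(w)\ge2\}$ if such $w$ exist, else $0$. For rooted trees $\mathscr T_j=(V_j,\mathcal E_j)$ with roots $\mathsf{root}_j$: the tensor product is $\mathscr T^\otimes=(V,\mathcal E^\otimes)$, $V=V_1\times\dots\times V_d$, $(\mathfrak v,\mathfrak w)\in\mathcal E^\otimes$ iff $(\mathfrak v_j,\mathfrak w_j)\in\mathcal E_j$ for all $j$; the directed Cartesian product $\mathscr T=(V,\mathcal E)$ has $(v,w)\in\mathcal E$ iff for some $k$, $(v_k,w_k)\in\mathcal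 E_k$ and $w_j=v_j$ ($j\ne k$), and the depth of $v\in V$ in $\mathscr T$ is $\alpha_v\in\mathbb N^d$ with $j$-th entry the depth of $v_j$ in $\mathscr T_j$, $|\alpha_v|$ its entry sum. A component of $\mathscr T^\otimes$ is an equivalence class for the relation "$\mathfrak v=\mathfrak w$ or $\mathfrak v,\mathfrak w$ connected by a path in $\mathscr T^\otimes$", viewed with the induced edges. *)

theory Defs
  imports Main "HOL-Library.FuncSet" "HOL-Library.Extended_Nat" "HOL-Library.Countable_Set"
begin

definition dgraph :: "'a set \<Rightarrow> ('a \<times> 'a) set \<Rightarrow> bool" where
  "dgraph V E \<longleftrightarrow> E \<subseteq> V \<times> V \<and> (\<forall>v. (v, v) \<notin> E)"

definition is_path :: "'a set \<Rightarrow> ('a \<times> 'a) set \<Rightarrow> 'a list \<Rightarrow> bool" where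
  "is_path V E xs \<longleftrightarrow> xs \<noteq> [] \<and> distinct xs \<and> set xs \<subseteq> V \<and>
     (\<forall>i. Suc i < length xs \<longrightarrow> (xs ! i, xs ! Suc i) \<in> E \<or> (xs ! Suc i, xs ! i) \<in> E)"

definition path_joins :: "'a set \<Rightarrow> ('a \<times> 'a) set \<Rightarrow> 'a \<Rightarrow> 'a \<Rightarrow> bool" where
  "path_joins V E u w \<longleftrightarrow> (\<exists>xs. is_path V E xs \<and> hd xs = u \<and> last xs = w)"

definition is_circuit :: "('a \<times> 'a) set \<Rightarrow> 'a list \<Rightarrow> bool" where
  "is_circuit E xs \<longleftrightarrow> length xs \<ge> 2 \<and> distinct xs \<and>
     (\<forall>i. Suc i < length xs \<longrightarrow> (xs ! i, xs ! Suc i) \<in> E) \<and> (last xs, hd xs) \<in> E"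

definition has_circuit :: "('a \<times> 'a) set \<Rightarrow> bool" where
  "has_circuit E \<longleftrightarrow> (\<exists>xs. is_circuit E xs)"

definition connected_graph :: "'a set \<Rightarrow> ('a \<times> 'a) set \<Rightarrow> bool" where
  "connected_graph V E \<longleftrightarrow> (\<forall>u\<in>V. \<forall>w\<in>V. u \<noteq> w \<longrightarrow> path_joins V E u w)"

definition Chi :: "('a \<times> 'a) set \<Rightarrow> 'a \<Rightarrow> 'a set" where
  "Chi E u = {v. (u, v) \<in> E}"

definition ChiS :: "('a \<times> 'a) set \<Rightarrow> 'a set \<Rightarrow> 'a set" where
  "ChiS E A = {v. \<exists>u\<in>A. (u, v) \<in> E}"

definition locally_finite :: "'a set \<Rightarrow> ('a \<times> 'a) set \<Rightarrow> bool" where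
  "locally_finite V E \<longleftrightarrow> (\<forall>u\<in>V. finite (Chi E u))"

definition leafless :: "'a set \<Rightarrow> ('a \<times> 'a) set \<Rightarrow> bool" where
  "leafless V E \<longleftrightarrow> (\<forall>u\<in>V. Chi E u \<noteq> {})"

definition directed_tree :: "'a set \<Rightarrow> ('a \<times> 'a) set \<Rightarrow> bool" where
  "directed_tree V E \<longleftrightarrow> dgraph V E \<and> connected_graph V E \<and> \<not> has_circuit E \<and>
     (\<forall>v\<in>V. (\<exists>u. (u, v) \<in> E) \<longrightarrow> (\<exists>!u. (u, v) \<in> E))"

definition rooted_tree :: "'a set \<Rightarrow> ('a \<times> 'a) set \<Rightarrow> 'a \<Rightarrow> bool" where
  "rooted_tree V E r \<longleftrightarrow> directed_tree V E \<and> r \<in> V \<and> (\<forall>u. (u, r) \<notin> E)"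

definition depth :: "('a \<times> 'a) set \<Rightarrow> 'a \<Rightarrow> 'a \<Rightarrow> nat" where
  "depth E r u = (THE n. u \<in> (ChiS E ^^ n) {r})"

definition branches :: "('a \<times> 'a) set \<Rightarrow> 'a \<Rightarrow> bool" where
  "branches E w \<longleftrightarrow> (\<exists>x y. x \<in> Chi E w \<and> y \<in> Chi E w \<and> x \<noteq> y)"

definition branching_index :: "'a set \<Rightarrow> ('a \<times> 'a) set \<Rightarrow> 'a \<Rightarrow> enat" where
  "branching_index V E r =
     (if \<exists>w\<in>V. branches E w
      then eSuc (Sup {enat (depth E r w) | w. w \<in> V \<and> branches E w})
      else 0)"

section \<open>Products of d rooted trees (indices 0..d-1)\<close>

definition prodV :: "nat \<Rightarrow> (nat \<Rightarrow> 'a set) \<Rightarrow> (nat \<Rightarrow> 'a) set" where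
  "prodV d VV = PiE {..<d} VV"

definition tensorE :: "nat \<Rightarrow> (nat \<Rightarrow> 'a set) \<Rightarrow> (nat \<Rightarrow> ('a \<times> 'a) set)
    \<Rightarrow> ((nat \<Rightarrow> 'a) \<times> (nat \<Rightarrow> 'a)) set" where
  "tensorE d VV EE = {(v, w). v \<in> prodV d VV \<and> w \<in> prodV d VV \<and>
       (\<forall>j<d. (v j, w j) \<in> EE j)}"

definition cartE :: "nat \<Rightarrow> (nat \<Rightarrow> 'a set) \<Rightarrow> (nat \<Rightarrow> ('a \<times> 'a) set)
    \<Rightarrow> ((nat \<Rightarrow> 'a) \<times> (nat \<Rightarrow> 'a)) set" where
  "cartE d VV EE = {(v, w). v \<in> prodV d VV \<and> w \<in> prodV d VV \<and>
       (\<exists>k<d. (v k, w k) \<in> EE k \<and> (\<forall>j<d. j \<noteq> k \<longrightarrow> w j = v j))}"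

definition comp_of :: "'a set \<Rightarrow> ('a \<times> 'a) set \<Rightarrow> 'a \<Rightarrow> 'a set" where
  "comp_of V E v = {w \<in> V. w = v \<or> path_joins V E v w}"

definition components :: "'a set \<Rightarrow> ('a \<times> 'a) set \<Rightarrow> 'a set set" where
  "components V E = comp_of V E ` V"

definition induced :: "('a \<times> 'a) set \<Rightarrow> 'a set \<Rightarrow> ('a \<times> 'a) set" where
  "induced E C = E \<inter> (C \<times> C)"

definition RootT :: "nat \<Rightarrow> (nat \<Rightarrow> 'a set) \<Rightarrow> (nat \<Rightarrow> 'a) \<Rightarrow> (nat \<Rightarrow> 'a) set" where
  "RootT d VV r = {v \<in> prodV d VV. \<exists>j<d. v j = r j}"

definition root_tuple :: "nat \<Rightarrow> (nat \<Rightarrow> 'a) \<Rightarrow> (nat \<Rightarrow> 'a)" where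
  "root_tuple d r = restrict r {..<d}"

end

theory Submission imports Defs "HOL-Library.FuncSet" begin

definition lev :: "('a \<times> 'a) set \<Rightarrow> 'a \<Rightarrow> nat \<Rightarrow> 'a set" where "lev E r n = (ChiS E ^^ n) {r}"
definition parent :: "('a \<times> 'a) set \<Rightarrow> 'a \<Rightarrow> 'a" where "parent E x = (THE u. (u,x) \<in> E)"

fun walk :: "('a \<times> 'a) set \<Rightarrow> 'a list \<Rightarrow> bool" where
  "walk E [] = True"
| "walk E [x] = True"
| "walk E (x # y # ys) = (((x,y) \<in> E \<or> (y,x) \<in> E) \<and> walk E (y # ys))"

lemma walk_iff: "walk E xs \<longleftrightarrow>
   (\<forall>i. Suc i < length xs \<longrightarrow> (xs ! i, xs ! Suc i) \<in> E \<or> (xs ! Suc i, xs ! i) \<in> E)"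
proof (induction E xs rule: walk.induct)
  case (3 E x y ys)
  show ?case
  proof
    assume "walk E (x # y # ys)"
    then show "\<forall>i. Suc i < length (x # y # ys) \<longrightarrow> ((x # y # ys) ! i, (x # y # ys) ! Suc i) \<in> E \<or> ((x # y # ys) ! Suc i, (x # y # ys) ! i) \<in> E"
      using 3 by (auto simp: nth_Cons split: nat.splits)
  next
    assume H: "\<forall>i. Suc i < length (x # y # ys) \<longrightarrow> ((x # y # ys) ! i, (x # y # ys) ! Suc i) \<in> E \<or> ((x # y # ys) ! Suc i, (x # y # ys) ! i) \<in> E"
    have "(x,y) \<in> E \<or> (y,x) \<in> E" using H[rule_format, of 0] by simp
    moreover have "walk E (y # ys)" unfolding 3
    proof (intro allI impI)
      fix i assume "Suc i < length (y # ys)"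
      then show "((y # ys) ! i, (y # ys) ! Suc i) \<in> E \<or> ((y # ys) ! Suc i, (y # ys) ! i) \<in> E"
        using H[rule_format, of "Suc i"] by simp
    qed
    ultimately show "walk E (x # y # ys)" by simp
  qed
qed auto

lemma is_path_walk: "is_path V E xs \<longleftrightarrow> xs \<noteq> [] \<and> distinct xs \<and> set xs \<subseteq> V \<and> walk E xs"
  unfolding is_path_def walk_iff by blast

lemma walk_append: "walk E (xs @ y # ys) \<longleftrightarrow> walk E (xs @ [y]) \<and> walk E (y # ys)"
proof (induction xs)
  case Nil then show ?case by simp
next
  case (Cons a xs) then show ?case by (cases xs) auto
qed

lemma walk_rev: "walk E (rev xs) \<longleftrightarrow> walk E xs"
proof (induction xs)
  case Nil then show ?case by simp
next
  case (Cons a xs)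
  show ?case
  proof (cases xs)
    case Nil then show ?thesis by simp
  next
    case (Cons b zs)
    have "walk E (rev (a # xs)) = walk E (rev zs @ b # [a])" using Cons by simp
    also have "\<dots> = (walk E (rev zs @ [b]) \<and> walk E [b, a])" by (rule walk_append)
    also have "\<dots> = (walk E xs \<and> walk E [b,a])" using Cons.IH Cons by simp
    also have "\<dots> = walk E (a # xs)" using Cons by auto
    finally show ?thesis .
  qed
qed

lemma walk_to_path:
  "walk E xs \<Longrightarrow> xs \<noteq> [] \<Longrightarrow> \<exists>ys. walk E ys \<and> distinct ys \<and> ys \<noteq> [] \<and> set ys \<subseteq> set xs
     \<and> hd ys = hd xs \<and> last ys = last xs"
proof (induction "length xs" arbitrary: xs rule: less_induct)
  case less
  show ?case
  proof (cases "distinct xs")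
    case True then show ?thesis using less.prems by blast
  next
    case False
    then obtain as bs cs y where xs: "xs = as @ [y] @ bs @ [y] @ cs"
      using not_distinct_decomp by blast
    let ?z = "as @ [y] @ cs"
    have w1: "walk E (as @ [y])" and w2: "walk E (y # bs @ [y] @ cs)"
      using less.prems(1) xs walk_append[of E as y "bs @ [y] @ cs"] by auto
    have "walk E ((y # bs) @ y # cs)" using w2 by simp
    then have w3: "walk E (y # cs)" using walk_append[of E "y # bs" y cs] by blast
    have wz: "walk E ?z" using w1 w3 walk_append[of E as y cs] by simp
    have "length ?z < length xs" using xs by simp
    then obtain ys where ys: "walk E ys" "distinct ys" "ys \<noteq> []" "set ys \<subseteq> set ?z"
        "hd ys = hd ?z" "last ys = last ?z"
      using less.hyps[OF _ wz] by auto
    have "hd ?z = hd xs" using xs by (cases as) auto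
    moreover have "last ?z = last xs" using xs by (cases cs) auto
    moreover have "set ?z \<subseteq> set xs" using xs by auto
    ultimately show ?thesis using ys by (intro exI[of _ ys]) auto
  qed
qed

lemma walk_mono: "walk E xs \<Longrightarrow> set xs \<subseteq> C \<Longrightarrow> walk (induced E C) xs"
  by (induction E xs rule: walk.induct) (auto simp: induced_def)

locale rtree =
  fixes V :: "'a set" and E :: "('a \<times> 'a) set" and r :: 'a
  assumes rt: "rooted_tree V E r" and lf: "leafless V E"
begin

lemma E_sub: "(x,y) \<in> E \<Longrightarrow> x \<in> V \<and> y \<in> V"
  using rt unfolding rooted_tree_def directed_tree_def dgraph_def by blast

lemma r_in: "r \<in> V" using rt unfolding rooted_tree_def by blast

lemma root_nopar: "(u, r) \<notin> E" using rt unfolding rooted_tree_def by blast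

lemma par_unique: "(u,v) \<in> E \<Longrightarrow> (u',v) \<in> E \<Longrightarrow> u = u'"
  using rt E_sub unfolding rooted_tree_def directed_tree_def by metis


lemma lev_0: "lev E r 0 = {r}" by (simp add: lev_def)
lemma lev_Suc: "lev E r (Suc n) = ChiS E (lev E r n)" by (simp add: lev_def)

lemma lev_sub: "lev E r n \<subseteq> V"
  by (induction n) (auto simp: lev_0 lev_Suc ChiS_def r_in dest: E_sub)

lemma lev_unique: "x \<in> lev E r n \<Longrightarrow> x \<in> lev E r m \<Longrightarrow> n = m"
proof (induction n arbitrary: m x)
  case 0
  then show ?case using root_nopar by (cases m) (auto simp: lev_0 lev_Suc ChiS_def)
next
  case (Suc n)
  then obtain u where u: "u \<in> lev E r n" "(u,x) \<in> E" by (auto simp: lev_Suc ChiS_def)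
  show ?case
  proof (cases m)
    case 0 then show ?thesis using Suc u root_nopar by (auto simp: lev_0)
  next
    case (Suc m')
    then obtain u' where "u' \<in> lev E r m'" "(u',x) \<in> E" using Suc.prems by (auto simp: lev_Suc ChiS_def)
    then show ?thesis using Suc.IH u par_unique Suc by metis
  qed
qed

lemma lev_all: assumes x: "x \<in> V" shows "\<exists>n. x \<in> lev E r n"
proof (cases "x = r")
  case True then show ?thesis using lev_0 by auto
next
  case False
  have "connected_graph V E" using rt unfolding rooted_tree_def directed_tree_def by blast
  moreover have "r \<noteq> x" using False by simp
  ultimately have "path_joins V E r x" using x r_in
    unfolding connected_graph_def by blast
  then obtain xs where p: "is_path V E xs" "hd xs = r" "last xs = x" unfolding path_joins_def by blast
  have ne: "xs \<noteq> []" and dist: "distinct xs"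
    and adj: "\<And>i. Suc i < length xs \<Longrightarrow> (xs ! i, xs ! Suc i) \<in> E \<or> (xs ! Suc i, xs ! i) \<in> E"
    using p(1) unfolding is_path_def by auto
  have "\<forall>i. i < length xs \<longrightarrow> xs ! i \<in> lev E r i \<and> (0 < i \<longrightarrow> (xs ! (i - 1), xs ! i) \<in> E)"
  proof (intro allI)
    fix i show "i < length xs \<longrightarrow> xs ! i \<in> lev E r i \<and> (0 < i \<longrightarrow> (xs ! (i - 1), xs ! i) \<in> E)"
    proof (induction i)
      case 0 then show ?case using p(2) ne by (simp add: lev_0 hd_conv_nth)
    next
      case (Suc i)
      show ?case
      proof
        assume l: "Suc i < length xs"
        then have IH: "xs ! i \<in> lev E r i" "0 < i \<longrightarrow> (xs ! (i - 1), xs ! i) \<in> E" using Suc by auto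
        have fw: "(xs ! i, xs ! Suc i) \<in> E"
        proof (rule ccontr)
          assume nf: "(xs ! i, xs ! Suc i) \<notin> E"
          then have bw: "(xs ! Suc i, xs ! i) \<in> E" using adj l by blast
          show False
          proof (cases i)
            case 0 then show False using bw p(2) ne root_nopar by (simp add: hd_conv_nth)
          next
            case (Suc k)
            then have "(xs ! k, xs ! i) \<in> E" using IH by simp
            then have "xs ! Suc i = xs ! k" using bw par_unique by blast
            moreover have "Suc i \<noteq> k" using Suc by simp
            ultimately show False using dist l Suc nth_eq_iff_index_eq[OF dist, of "Suc i" k] by simp
          qed
        qed
        then show "xs ! Suc i \<in> lev E r (Suc i) \<and> (0 < Suc i \<longrightarrow> (xs ! (Suc i - 1), xs ! Suc i) \<in> E)"
          using IH by (auto simp: lev_Suc ChiS_def)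
      qed
    qed
  qed
  then have "last xs \<in> lev E r (length xs - 1)" using ne by (simp add: last_conv_nth)
  then show ?thesis using p(3) by blast
qed

lemma depth_eq: assumes "x \<in> lev E r n" shows "depth E r x = n"
  unfolding depth_def
proof (rule the_equality)
  show "x \<in> (ChiS E ^^ n) {r}" using assms by (simp add: lev_def)
  fix m assume "x \<in> (ChiS E ^^ m) {r}"
  then show "m = n" using assms lev_unique by (simp add: lev_def)
qed

lemma depth_lev: assumes "x \<in> V" shows "x \<in> lev E r (depth E r x)"
proof -
  obtain n where "x \<in> lev E r n" using lev_all assms by blast
  then show ?thesis using depth_eq by simp
qed

lemma edge_lev: "(x,y) \<in> E \<Longrightarrow> x \<in> lev E r n \<Longrightarrow> y \<in> lev E r (Suc n)"
  by (auto simp: lev_Suc ChiS_def)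

lemma depth_edge: assumes "(x,y) \<in> E" shows "depth E r y = Suc (depth E r x)"
proof -
  have "x \<in> lev E r (depth E r x)" using depth_lev E_sub assms by blast
  then have "y \<in> lev E r (Suc (depth E r x))" using edge_lev assms by blast
  then show ?thesis by (rule depth_eq)
qed

lemma depth0: assumes "x \<in> V" shows "depth E r x = 0 \<longleftrightarrow> x = r"
proof
  assume "depth E r x = 0" then show "x = r" using depth_lev[OF assms] by (simp add: lev_0)
next
  assume "x = r" then show "depth E r x = 0" using depth_eq[of x 0] by (simp add: lev_0)
qed


lemma par_eq: assumes "(u,x) \<in> E" shows "parent E x = u"
  unfolding parent_def
proof (rule the_equality)
  show "(u,x) \<in> E" by fact
  fix u' assume "(u',x) \<in> E" then show "u' = u" using assms par_unique by blast
qed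

lemma par_lev: "x \<in> lev E r (Suc n) \<Longrightarrow> (parent E x, x) \<in> E \<and> parent E x \<in> lev E r n"
  using par_eq by (auto simp: lev_Suc ChiS_def)

lemma anc_lev: "x \<in> lev E r (n + k) \<Longrightarrow> (parent E ^^ k) x \<in> lev E r n"
proof (induction k arbitrary: x)
  case 0 then show ?case by simp
next
  case (Suc k)
  then have "parent E x \<in> lev E r (n + k)" using par_lev by (metis add_Suc_right)
  then show ?case using Suc.IH by (simp add: funpow_Suc_right del: funpow.simps)
qed

lemma lev_ne: "lev E r n \<noteq> {}"
proof (induction n)
  case 0 then show ?case by (simp add: lev_0)
next
  case (Suc n)
  then obtain x where "x \<in> lev E r n" by auto
  moreover then obtain y where "(x,y) \<in> E" using lf lev_sub unfolding leafless_def Chi_def by blast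
  ultimately show ?case by (auto simp: lev_Suc ChiS_def)
qed

lemma Chi_sub: "Chi E x \<subseteq> V" using E_sub by (auto simp: Chi_def)
lemma Chi_ne: "x \<in> V \<Longrightarrow> Chi E x \<noteq> {}" using lf by (auto simp: leafless_def)

end

definition mdep :: "nat \<Rightarrow> (nat \<Rightarrow> ('a \<times> 'a) set) \<Rightarrow> (nat \<Rightarrow> 'a) \<Rightarrow> (nat \<Rightarrow> 'a) \<Rightarrow> nat" where
  "mdep d EE r v = Min ((\<lambda>j. depth (EE j) (r j) (v j)) ` {..<d})"
definition tpar :: "nat \<Rightarrow> (nat \<Rightarrow> ('a \<times> 'a) set) \<Rightarrow> (nat \<Rightarrow> 'a) \<Rightarrow> (nat \<Rightarrow> 'a)" where
  "tpar d EE v = restrict (\<lambda>j. parent (EE j) (v j)) {..<d}"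
definition rho :: "nat \<Rightarrow> (nat \<Rightarrow> ('a \<times> 'a) set) \<Rightarrow> (nat \<Rightarrow> 'a) \<Rightarrow> (nat \<Rightarrow> 'a) \<Rightarrow> (nat \<Rightarrow> 'a)" where
  "rho d EE r v = restrict (\<lambda>j. (parent (EE j) ^^ mdep d EE r v) (v j)) {..<d}"

lemma countable_PiE':
  "finite I \<Longrightarrow> (\<And>i. i \<in> I \<Longrightarrow> countable (F i)) \<Longrightarrow> countable (Pi\<^sub>E I F)"
  by (induct I arbitrary: F rule: finite_induct) (auto simp: PiE_insert_eq)

lemma enat_max_lemma:
  fixes T :: "'i \<Rightarrow> enat set"
  assumes "finite I" "I \<noteq> {}"
  shows "(if (\<Union>i\<in>I. T i) \<noteq> {} then eSuc (Sup (\<Union>i\<in>I. T i)) else 0)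
       = Max ((\<lambda>i. if T i \<noteq> {} then eSuc (Sup (T i)) else 0) ` I)"
proof -
  have h: "\<And>X::enat set. (if X \<noteq> {} then eSuc (Sup X) else 0) = Sup (eSuc ` X)"
    by (simp add: eSuc_Sup bot_enat_def)
  have "Sup (eSuc ` (\<Union>i\<in>I. T i)) = Sup (\<Union>i\<in>I. eSuc ` T i)" by (simp add: image_UN)
  also have "\<dots> = (SUP x\<in>(\<Union>i\<in>I. eSuc ` T i). x)" by simp
  also have "\<dots> = (SUP i\<in>I. SUP x\<in>eSuc ` T i. x)" by (rule SUP_UNION)
  also have "\<dots> = Sup ((\<lambda>i. Sup (eSuc ` T i)) ` I)" by simp
  also have "\<dots> = Max ((\<lambda>i. Sup (eSuc ` T i)) ` I)"
    using assms by (intro cSup_eq_Max) auto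
  finally show ?thesis unfolding h .
qed

locale prodtree =
  fixes d :: nat and VV :: "nat \<Rightarrow> 'a set" and EE :: "nat \<Rightarrow> ('a \<times> 'a) set" and r :: "nat \<Rightarrow> 'a"
  assumes d1: "d \<ge> 1"
    and trees: "\<And>j. j < d \<Longrightarrow> rooted_tree (VV j) (EE j) (r j) \<and> leafless (VV j) (EE j)"
begin

lemma tr: "j < d \<Longrightarrow> rtree (VV j) (EE j) (r j)"
  using trees by (simp add: rtree_def)

abbreviation "VP \<equiv> prodV d VV"
abbreviation "Et \<equiv> tensorE d VV EE"
abbreviation "RR \<equiv> RootT d VV r"
abbreviation "dp j x \<equiv> depth (EE j) (r j) x"
abbreviation "md \<equiv> mdep d EE r"
abbreviation "rh \<equiv> rho d EE r"
abbreviation "tp \<equiv> tpar d EE"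
abbreviation "rt \<equiv> root_tuple d r"
abbreviation "Vr \<equiv> comp_of VP Et rt"
abbreviation "F \<equiv> induced Et Vr"

lemma Et_iff: "(u,w) \<in> Et \<longleftrightarrow> u \<in> VP \<and> w \<in> VP \<and> (\<forall>j<d. (u j, w j) \<in> EE j)"
  by (simp add: tensorE_def)

lemma VP_iff: "v \<in> VP \<longleftrightarrow> (\<forall>j<d. v j \<in> VV j) \<and> (\<forall>j. j \<ge> d \<longrightarrow> v j = undefined)"
  by (auto simp: prodV_def PiE_def extensional_def)

lemma edge_dp: "(u,w) \<in> Et \<Longrightarrow> j < d \<Longrightarrow> dp j (w j) = Suc (dp j (u j))"
  using rtree.depth_edge[OF tr] by (auto simp: Et_iff)

lemma md_props: assumes "v \<in> VP"
  shows "\<exists>j<d. dp j (v j) = md v" "\<And>j. j < d \<Longrightarrow> md v \<le> dp j (v j)"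
proof -
  have ne: "(\<lambda>j. dp j (v j)) ` {..<d} \<noteq> {}" using d1 by (auto simp: lessThan_empty_iff)
  have "md v \<in> (\<lambda>j. dp j (v j)) ` {..<d}" unfolding mdep_def using ne by (intro Min_in) auto
  then show "\<exists>j<d. dp j (v j) = md v" by auto
  fix j assume "j < d" then show "md v \<le> dp j (v j)" unfolding mdep_def by (intro Min_le) auto
qed

lemma md_edge: assumes "(u,w) \<in> Et" shows "md w = Suc (md u)"
proof -
  have "(\<lambda>j. dp j (w j)) ` {..<d} = Suc ` ((\<lambda>j. dp j (u j)) ` {..<d})"
    using edge_dp[OF assms] by (auto simp: image_iff)
  moreover have "Min (Suc ` ((\<lambda>j. dp j (u j)) ` {..<d})) = Suc (Min ((\<lambda>j. dp j (u j)) ` {..<d}))"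
    using d1 by (intro mono_Min_commute[symmetric]) (auto simp: mono_def lessThan_empty_iff)
  ultimately show ?thesis unfolding mdep_def by simp
qed

lemma RR_iff: "v \<in> RR \<longleftrightarrow> v \<in> VP \<and> (\<exists>j<d. v j = r j)"
  by (simp add: RootT_def)

lemma md0: assumes "v \<in> VP" shows "md v = 0 \<longleftrightarrow> v \<in> RR"
proof
  assume "md v = 0"
  then obtain j where "j < d" "dp j (v j) = 0" using md_props(1)[OF assms] by auto
  then have "v j = r j" using rtree.depth0[OF tr] assms VP_iff by blast
  then show "v \<in> RR" using assms \<open>j < d\<close> RR_iff by blast
next
  assume "v \<in> RR"
  then obtain j where "j < d" "v j = r j" using RR_iff by blast
  then have "dp j (v j) = 0" using rtree.depth0[OF tr] rtree.r_in[OF tr] by simp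
  then show "md v = 0" using md_props(2)[OF assms \<open>j < d\<close>] by simp
qed

lemma rh_coord: assumes "v \<in> VP" "j < d"
  shows "rh v j \<in> lev (EE j) (r j) (dp j (v j) - md v)"
proof -
  have "v j \<in> lev (EE j) (r j) (dp j (v j))" using rtree.depth_lev[OF tr] assms VP_iff by blast
  moreover have "dp j (v j) = (dp j (v j) - md v) + md v" using md_props(2)[OF assms] by simp
  ultimately have "v j \<in> lev (EE j) (r j) ((dp j (v j) - md v) + md v)" by simp
  then show ?thesis using rtree.anc_lev[OF tr[OF assms(2)]] assms(2) by (simp add: rho_def)
qed

lemma rh_R: assumes "v \<in> VP" shows "rh v \<in> RR"
proof -
  have "rh v \<in> VP" unfolding VP_iff
  proof (intro conjI allI impI)
    fix j assume "j < d" then show "rh v j \<in> VV j"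
      using rh_coord[OF assms] rtree.lev_sub[OF tr] by blast
  next
    fix j assume "d \<le> j" then show "rh v j = undefined" by (simp add: rho_def)
  qed
  moreover obtain j where "j < d" "dp j (v j) = md v" using md_props(1)[OF assms] by auto
  then have "rh v j = r j" using rh_coord[OF assms] rtree.lev_0[OF tr] by fastforce
  ultimately show ?thesis using \<open>j < d\<close> RR_iff by blast
qed

lemma rh_id: assumes "v \<in> RR" shows "rh v = v"
proof -
  have v: "v \<in> VP" using assms RR_iff by blast
  then have "md v = 0" using md0 assms by blast
  then show ?thesis using v by (auto simp: rho_def VP_iff fun_eq_iff)
qed

lemma rh_edge: assumes "(u,w) \<in> Et" shows "rh w = rh u"
proof -
  have "\<And>j. j < d \<Longrightarrow> parent (EE j) (w j) = u j"
    using assms rtree.par_eq[OF tr] by (auto simp: Et_iff)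
  then show ?thesis using md_edge[OF assms]
    by (auto simp: rho_def fun_eq_iff funpow_Suc_right simp del: funpow.simps)
qed

lemma tp_edge: assumes "v \<in> VP" "v \<notin> RR" shows "(tp v, v) \<in> Et"
proof -
  have c: "\<And>j. j < d \<Longrightarrow> (parent (EE j) (v j), v j) \<in> EE j"
  proof -
    fix j assume j: "j < d"
    have "v j \<noteq> r j" using assms j RR_iff by blast
    then have "dp j (v j) \<noteq> 0" using rtree.depth0[OF tr[OF j]] assms j VP_iff by blast
    then obtain n where "dp j (v j) = Suc n" using not0_implies_Suc by blast
    then have "v j \<in> lev (EE j) (r j) (Suc n)" using rtree.depth_lev[OF tr[OF j]] assms j VP_iff by metis
    then show "(parent (EE j) (v j), v j) \<in> EE j" using rtree.par_lev[OF tr[OF j]] by blast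
  qed
  have "tp v \<in> VP" unfolding VP_iff
    using c rtree.E_sub[OF tr] by (auto simp: tpar_def)
  then show ?thesis using c assms by (auto simp: Et_iff tpar_def)
qed

lemma tp_unique: assumes "(u,v) \<in> Et" shows "u = tp v"
proof (rule ext)
  fix j
  have u: "u \<in> VP" and c: "\<forall>j<d. (u j, v j) \<in> EE j" using assms Et_iff by blast+
  show "u j = tp v j"
  proof (cases "j < d")
    case True
    then have "parent (EE j) (v j) = u j" using rtree.par_eq[OF tr[OF True]] c by blast
    then show ?thesis using True by (simp add: tpar_def)
  next
    case False
    then show ?thesis using u by (simp add: tpar_def VP_iff)
  qed
qed

lemma chain: assumes "v \<in> VP"
  shows "\<exists>xs. walk Et xs \<and> xs \<noteq> [] \<and> hd xs = v \<and> last xs = rh v \<and> set xs \<subseteq> VP"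
  using assms
proof (induction "md v" arbitrary: v)
  case 0
  then have "v \<in> RR" using md0 by metis
  then show ?case using rh_id 0 by (intro exI[of _ "[v]"]) auto
next
  case (Suc n)
  then have nR: "v \<notin> RR" using md0 by fastforce
  have e: "(tp v, v) \<in> Et" using tp_edge[OF Suc.prems nR] .
  have "md v = Suc (md (tp v))" using md_edge[OF e] .
  then have "n = md (tp v)" using Suc.hyps by simp
  moreover have tv: "tp v \<in> VP" using e Et_iff by blast
  ultimately obtain xs where xs: "walk Et xs" "xs \<noteq> []" "hd xs = tp v" "last xs = rh (tp v)" "set xs \<subseteq> VP"
    using Suc.hyps(1) by blast
  have "walk Et (v # xs)" using xs e by (cases xs) auto
  moreover have "rh (tp v) = rh v" using rh_edge[OF e] by simp
  ultimately show ?case using xs Suc.prems by (intro exI[of _ "v # xs"]) auto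
qed

lemma walk_rh: "walk Et xs \<Longrightarrow> x \<in> set xs \<Longrightarrow> rh x = rh (hd xs)"
  by (induction Et xs rule: walk.induct) (auto dest: rh_edge)

lemma comp_char: assumes "v \<in> VP" shows "comp_of VP Et v = {w \<in> VP. rh w = rh v}"
proof
  show "comp_of VP Et v \<subseteq> {w \<in> VP. rh w = rh v}"
  proof
    fix w assume "w \<in> comp_of VP Et v"
    then have w: "w \<in> VP" "w = v \<or> path_joins VP Et v w" by (auto simp: comp_of_def)
    have "rh w = rh v"
    proof (cases "w = v")
      case False
      then obtain xs where "is_path VP Et xs" "hd xs = v" "last xs = w" using w path_joins_def by metis
      then show ?thesis using walk_rh[of xs w] by (auto simp: is_path_walk)
    qed simp
    then show "w \<in> {w \<in> VP. rh w = rh v}" using w by simp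
  qed
next
  show "{w \<in> VP. rh w = rh v} \<subseteq> comp_of VP Et v"
  proof
    fix w assume w: "w \<in> {w \<in> VP. rh w = rh v}"
    show "w \<in> comp_of VP Et v"
    proof (cases "w = v")
      case False
      obtain xs where xs: "walk Et xs" "xs \<noteq> []" "hd xs = v" "last xs = rh v" "set xs \<subseteq> VP"
        using chain[OF assms] by blast
      obtain ys where ys: "walk Et ys" "ys \<noteq> []" "hd ys = w" "last ys = rh v" "set ys \<subseteq> VP"
        using chain[of w] w by auto
      have xs2: "xs = butlast xs @ [rh v]" using xs by (metis append_butlast_last_id)
      have rys: "rev ys = rh v # tl (rev ys)" using ys by (metis hd_rev list.collapse rev_is_Nil_conv)
      let ?z = "butlast xs @ rev ys"
      have "walk Et (rev ys)" using ys(1) walk_rev[of Et ys] by simp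
      then have wr: "walk Et (rh v # tl (rev ys))" using rys by metis
      have wx: "walk Et (butlast xs @ [rh v])" using xs2 xs(1) by simp
      have zeq: "?z = butlast xs @ rh v # tl (rev ys)" using rys by simp
      have "walk Et ?z" unfolding zeq using walk_append[of Et "butlast xs" "rh v" "tl (rev ys)"] wr wx by blast
      moreover have "?z \<noteq> []" using ys by simp
      moreover have "hd ?z = v"
      proof (cases "butlast xs")
        case Nil then have "xs = [rh v]" using xs2 by simp
        then show ?thesis using xs Nil ys(4) by (simp add: hd_rev)
      next
        case (Cons a l) then show ?thesis using xs xs2 by (metis hd_append2 list.distinct(1))
      qed
      moreover have "last ?z = w" using ys by (simp add: last_rev)
      moreover have "set ?z \<subseteq> VP" using xs ys by (auto dest: in_set_butlastD)
      ultimately obtain zs where "walk Et zs" "distinct zs" "zs \<noteq> []" "set zs \<subseteq> VP"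
          "hd zs = v" "last zs = w"
        using walk_to_path[of Et ?z] by blast
      then have "path_joins VP Et v w" unfolding path_joins_def is_path_walk by blast
      then show ?thesis using w by (simp add: comp_of_def)
    qed (use w in \<open>simp add: comp_of_def\<close>)
  qed
qed

definition L :: "nat \<Rightarrow> (nat \<Rightarrow> 'a) set" where "L n = {w \<in> VP. \<forall>j<d. dp j (w j) = n}"

lemma Chi_Et: assumes "v \<in> VP" shows "Chi Et v = PiE {..<d} (\<lambda>j. Chi (EE j) (v j))"
proof
  show "Chi Et v \<subseteq> PiE {..<d} (\<lambda>j. Chi (EE j) (v j))"
    by (auto simp: Chi_def Et_iff VP_iff PiE_def extensional_def)
next
  show "PiE {..<d} (\<lambda>j. Chi (EE j) (v j)) \<subseteq> Chi Et v"
  proof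
    fix w assume w: "w \<in> PiE {..<d} (\<lambda>j. Chi (EE j) (v j))"
    have "w \<in> VP" unfolding VP_iff using w rtree.Chi_sub[OF tr] by (auto simp: PiE_def extensional_def)
    then show "w \<in> Chi Et v" using w assms by (auto simp: Chi_def Et_iff)
  qed
qed

lemma Chi_ne: assumes "v \<in> VP" shows "Chi Et v \<noteq> {}"
proof -
  have "\<forall>i\<in>{..<d}. Chi (EE i) (v i) \<noteq> {}"
  proof
    fix i assume "i \<in> {..<d}"
    then have i: "i < d" by simp
    then have "v i \<in> VV i" using assms VP_iff by blast
    then show "Chi (EE i) (v i) \<noteq> {}" using rtree.Chi_ne[OF tr[OF i]] by blast
  qed
  then show ?thesis unfolding Chi_Et[OF assms] PiE_eq_empty_iff by blast
qed

lemma item1: assumes "v \<in> RR" shows "\<not> (\<exists>u\<in>VP. (u, v) \<in> Et)"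
proof
  obtain j where j: "j < d" "v j = r j" using assms RR_iff by blast
  assume "\<exists>u\<in>VP. (u, v) \<in> Et"
  then obtain u where "(u, v) \<in> Et" by blast
  then have "(u j, r j) \<in> EE j" using j Et_iff by metis
  then show False using rtree.root_nopar[OF tr[OF j(1)]] by blast
qed

lemma item2: "v \<in> VP - RR \<Longrightarrow> \<exists>!u. u \<in> VP \<and> (u, v) \<in> Et"
proof -
  assume v: "v \<in> VP - RR"
  then have e: "(tp v, v) \<in> Et" using tp_edge by blast
  then have "tp v \<in> VP" using Et_iff by blast
  then show ?thesis
  proof (intro ex1I[of _ "tp v"])
    show "tp v \<in> VP \<and> (tp v, v) \<in> Et" using e \<open>tp v \<in> VP\<close> by blast
  next
    fix u assume "u \<in> VP \<and> (u, v) \<in> Et"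
    then show "u = tp v" using tp_unique by blast
  qed
qed

lemma d0: "0 < d" using d1 by simp

lemma noloop: "(x,x) \<notin> Et"
proof
  assume "(x,x) \<in> Et"
  from edge_dp[OF this d0] show False by simp
qed

lemma item3: "\<not> has_circuit Et"
proof
  assume "has_circuit Et"
  then obtain xs where c: "length xs \<ge> 2" "\<forall>i. Suc i < length xs \<longrightarrow> (xs ! i, xs ! Suc i) \<in> Et"
    "(last xs, hd xs) \<in> Et" unfolding has_circuit_def is_circuit_def by blast
  have "\<forall>i. i < length xs \<longrightarrow> dp 0 ((xs ! i) 0) = dp 0 ((xs ! 0) 0) + i"
  proof (intro allI)
    fix i show "i < length xs \<longrightarrow> dp 0 ((xs ! i) 0) = dp 0 ((xs ! 0) 0) + i"
      by (induction i) (use c(2) edge_dp[OF _ d0] in auto)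
  qed
  then have "dp 0 ((xs ! (length xs - 1)) 0) = dp 0 ((xs ! 0) 0) + (length xs - 1)" using c(1)
    by simp
  moreover have "xs \<noteq> []" using c(1) by auto
  ultimately have "dp 0 (last xs 0) = dp 0 (hd xs 0) + (length xs - 1)"
    by (simp add: last_conv_nth hd_conv_nth)
  moreover have "dp 0 (hd xs 0) = Suc (dp 0 (last xs 0))" using edge_dp[OF c(3) d0] .
  ultimately show False by simp
qed

lemma item4: "u \<in> RR \<Longrightarrow> w \<in> RR \<Longrightarrow> u \<noteq> w \<Longrightarrow> \<not> path_joins VP Et u w"
proof
  assume a: "u \<in> RR" "w \<in> RR" "u \<noteq> w" "path_joins VP Et u w"
  then obtain xs where "is_path VP Et xs" "hd xs = u" "last xs = w" unfolding path_joins_def by blast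
  then have "rh w = rh u" using walk_rh[of xs w] by (auto simp: is_path_walk)
  then show False using a(3) rh_id[OF a(1)] rh_id[OF a(2)] by simp
qed

lemma in_comp: "v \<in> VP \<Longrightarrow> v \<in> comp_of VP Et v" by (simp add: comp_of_def)

lemma comp_rh: assumes v: "v \<in> VP" shows "comp_of VP Et (rh v) = comp_of VP Et v"
proof -
  have q: "rh v \<in> RR" using rh_R v by blast
  then have "rh (rh v) = rh v" "rh v \<in> VP" using rh_id RR_iff by auto
  then show ?thesis using comp_char[OF v] comp_char[OF \<open>rh v \<in> VP\<close>] by simp
qed

lemma item5: "\<exists>f. bij_betw f (components VP Et) RR"
proof -
  let ?g = "comp_of VP Et"
  have "inj_on ?g RR"
  proof
    fix q q' assume q: "q \<in> RR" "q' \<in> RR" "?g q = ?g q'"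
    have qV: "q \<in> VP" "q' \<in> VP" using q RR_iff by auto
    then have "q \<in> ?g q'" using in_comp[OF qV(1)] q(3) by simp
    then have "rh q = rh q'" using comp_char[OF qV(2)] by blast
    then show "q = q'" using rh_id[OF q(1)] rh_id[OF q(2)] by simp
  qed
  moreover have "?g ` RR = components VP Et"
  proof
    show "?g ` RR \<subseteq> components VP Et" unfolding components_def using RR_iff by blast
  next
    show "components VP Et \<subseteq> ?g ` RR"
    proof
      fix C assume "C \<in> components VP Et"
      then obtain v where v: "v \<in> VP" "C = ?g v" unfolding components_def by blast
      then have "C = ?g (rh v)" using comp_rh by simp
      then show "C \<in> ?g ` RR" using rh_R v by blast
    qed
  qed
  ultimately have "bij_betw ?g RR (components VP Et)" unfolding bij_betw_def by blast
  then show ?thesis using bij_betw_inv_into by blast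
qed

lemma item5b: "(\<forall>j<d. countable (VV j)) \<longrightarrow> countable (components VP Et)"
  unfolding components_def prodV_def by (auto intro: countable_PiE')

lemma circ_mono: "has_circuit (induced Et C) \<Longrightarrow> has_circuit Et"
  unfolding has_circuit_def is_circuit_def induced_def by blast

lemma item6: assumes "C \<in> components VP Et" shows "\<exists>q\<in>RR \<inter> C. rooted_tree C (induced Et C) q"
proof -
  obtain v where v: "v \<in> VP" "C = comp_of VP Et v" using assms unfolding components_def by blast
  have Cc: "C = {w \<in> VP. rh w = rh v}" using comp_char v by simp
  let ?q = "rh v"
  have q: "?q \<in> RR" using rh_R v by blast
  then have qC: "?q \<in> C" using Cc rh_id RR_iff by auto
  have "dgraph C (induced Et C)" unfolding dgraph_def induced_def using noloop by blast
  moreover have "connected_graph C (induced Et C)" unfolding connected_graph_def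
  proof (intro ballI impI)
    fix u w assume uw: "u \<in> C" "w \<in> C" "u \<noteq> w"
    then have u: "u \<in> VP" and "rh w = rh u" using Cc by auto
    then have "w \<in> comp_of VP Et u" using comp_char uw Cc by auto
    then obtain xs where xs: "is_path VP Et xs" "hd xs = u" "last xs = w"
      using uw unfolding comp_of_def path_joins_def by auto
    have "set xs \<subseteq> C"
    proof
      fix x assume x: "x \<in> set xs"
      then have "rh x = rh u" using walk_rh xs by (auto simp: is_path_walk)
      moreover have "x \<in> VP" using x xs by (auto simp: is_path_walk)
      ultimately show "x \<in> C" using Cc uw by auto
    qed
    then have "is_path C (induced Et C) xs" using xs walk_mono by (auto simp: is_path_walk)
    then show "path_joins C (induced Et C) u w" using xs unfolding path_joins_def by blast
  qed
  moreover have "\<not> has_circuit (induced Et C)" using circ_mono item3 by blast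
  moreover have "\<forall>x\<in>C. (\<exists>u. (u, x) \<in> induced Et C) \<longrightarrow> (\<exists>!u. (u, x) \<in> induced Et C)"
  proof (intro ballI impI)
    fix x assume "x \<in> C" "\<exists>u. (u, x) \<in> induced Et C"
    then obtain u where u: "(u, x) \<in> induced Et C" by blast
    show "\<exists>!u. (u, x) \<in> induced Et C"
    proof (rule ex1I[of _ u])
      show "(u, x) \<in> induced Et C" by fact
    next
      fix u' assume "(u', x) \<in> induced Et C"
      then have "u' = tp x" using tp_unique unfolding induced_def by blast
      moreover have "u = tp x" using u tp_unique unfolding induced_def by blast
      ultimately show "u' = u" by simp
    qed
  qed
  moreover have "\<forall>u. (u, ?q) \<notin> induced Et C" using item1[OF q] Et_iff unfolding induced_def by blast
  ultimately have "rooted_tree C (induced Et C) ?q"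
    unfolding rooted_tree_def directed_tree_def using qC by blast
  then show ?thesis using q qC by blast
qed

lemma item8: "leafless VP Et" unfolding leafless_def using Chi_ne by blast

lemma lf_Et: "locally_finite VP Et \<longleftrightarrow> (\<forall>v\<in>VP. \<forall>j<d. finite (Chi (EE j) (v j)))"
proof -
  have "\<And>v. v \<in> VP \<Longrightarrow> finite (Chi Et v) \<longleftrightarrow> (\<forall>j<d. finite (Chi (EE j) (v j)))"
  proof -
    fix v assume v: "v \<in> VP"
    let ?P = "PiE {..<d} (\<lambda>j. Chi (EE j) (v j))"
    have ne: "?P \<noteq> {}" using Chi_ne[OF v] unfolding Chi_Et[OF v] .
    then obtain b where b: "b \<in> ?P" by blast
    show "finite (Chi Et v) \<longleftrightarrow> (\<forall>j<d. finite (Chi (EE j) (v j)))"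
      unfolding Chi_Et[OF v]
    proof
      assume f: "finite ?P"
      show "\<forall>j<d. finite (Chi (EE j) (v j))"
      proof (intro allI impI)
        fix j assume j: "j < d"
        have "Chi (EE j) (v j) \<subseteq> (\<lambda>w. w j) ` ?P"
        proof
          fix y assume y: "y \<in> Chi (EE j) (v j)"
          have "b(j := y) \<in> ?P" using b y j by (auto simp: PiE_def extensional_def)
          then show "y \<in> (\<lambda>w. w j) ` ?P" by (intro image_eqI[of _ _ "b(j := y)"]) auto
        qed
        then show "finite (Chi (EE j) (v j))" using f finite_subset by blast
      qed
    next
      assume "\<forall>j<d. finite (Chi (EE j) (v j))"
      then show "finite ?P" by (intro finite_PiE) auto
    qed
  qed
  then show ?thesis unfolding locally_finite_def by blast
qed

lemma lf_Ec: "locally_finite VP (cartE d VV EE) \<longleftrightarrow> (\<forall>v\<in>VP. \<forall>j<d. finite (Chi (EE j) (v j)))"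
proof -
  have "\<And>v. v \<in> VP \<Longrightarrow> finite (Chi (cartE d VV EE) v) \<longleftrightarrow> (\<forall>j<d. finite (Chi (EE j) (v j)))"
  proof -
    fix v assume v: "v \<in> VP"
    have sub1: "Chi (cartE d VV EE) v \<subseteq> (\<Union>k<d. (\<lambda>y. v(k := y)) ` Chi (EE k) (v k))"
    proof
      fix w assume "w \<in> Chi (cartE d VV EE) v"
      then obtain k where k: "k < d" "(v k, w k) \<in> EE k" "\<forall>j<d. j \<noteq> k \<longrightarrow> w j = v j" "w \<in> VP"
        by (auto simp: Chi_def cartE_def)
      have "w = v(k := w k)"
      proof (rule ext)
        fix x show "w x = (v(k := w k)) x"
          using k v by (cases "x = k"; cases "x < d") (auto simp: VP_iff)
      qed
      then show "w \<in> (\<Union>k<d. (\<lambda>y. v(k := y)) ` Chi (EE k) (v k))" using k by (auto simp: Chi_def)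
    qed
    have sub2: "\<And>k. k < d \<Longrightarrow> Chi (EE k) (v k) \<subseteq> (\<lambda>w. w k) ` Chi (cartE d VV EE) v"
    proof
      fix k y assume k: "k < d" and y: "y \<in> Chi (EE k) (v k)"
      have "v(k := y) \<in> VP" using v k y rtree.Chi_sub[OF tr[OF k]] by (auto simp: VP_iff)
      then have "v(k := y) \<in> Chi (cartE d VV EE) v" using v k y by (auto simp: Chi_def cartE_def)
      then show "y \<in> (\<lambda>w. w k) ` Chi (cartE d VV EE) v" by (intro image_eqI[of _ _ "v(k := y)"]) auto
    qed
    show "finite (Chi (cartE d VV EE) v) \<longleftrightarrow> (\<forall>j<d. finite (Chi (EE j) (v j)))"
    proof
      assume "finite (Chi (cartE d VV EE) v)"
      then show "\<forall>j<d. finite (Chi (EE j) (v j))" using sub2 by (meson finite_imageI finite_subset)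
    next
      assume a: "\<forall>j<d. finite (Chi (EE j) (v j))"
      have "finite (\<Union>k<d. (\<lambda>y. v(k := y)) ` Chi (EE k) (v k))" using a by auto
      then show "finite (Chi (cartE d VV EE) v)" using sub1 finite_subset by blast
    qed
  qed
  then show ?thesis unfolding locally_finite_def by blast
qed

lemma item7: "locally_finite VP Et \<longleftrightarrow> locally_finite VP (cartE d VV EE)"
  using lf_Et lf_Ec by simp

lemma rt_R: "rt \<in> RR"
  using d0 rtree.r_in[OF tr] by (auto simp: RR_iff VP_iff root_tuple_def)

lemma Vr_iff: "w \<in> Vr \<longleftrightarrow> (\<exists>n. w \<in> L n)"
proof -
  have Vr: "Vr = {w \<in> VP. rh w = rt}" using comp_char rt_R rh_id RR_iff by auto
  have "\<And>w. w \<in> VP \<Longrightarrow> rh w = rt \<longleftrightarrow> (\<forall>j<d. dp j (w j) = md w)"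
  proof
    fix w assume w: "w \<in> VP" and e: "rh w = rt"
    show "\<forall>j<d. dp j (w j) = md w"
    proof (intro allI impI)
      fix j assume j: "j < d"
      have "rh w j \<in> lev (EE j) (r j) (dp j (w j) - md w)" using rh_coord[OF w j] .
      moreover have "rh w j \<in> lev (EE j) (r j) 0" using e j by (simp add: root_tuple_def rtree.lev_0[OF tr[OF j]])
      ultimately have "dp j (w j) - md w = 0" using rtree.lev_unique[OF tr[OF j]] by blast
      then show "dp j (w j) = md w" using md_props(2)[OF w j] by simp
    qed
  next
    fix w assume w: "w \<in> VP" and e: "\<forall>j<d. dp j (w j) = md w"
    show "rh w = rt"
    proof (rule ext)
      fix j show "rh w j = rt j"
      proof (cases "j < d")
        case True
        then have "rh w j \<in> lev (EE j) (r j) 0" using rh_coord[OF w True] e by simp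
        then show ?thesis using True by (simp add: root_tuple_def rtree.lev_0[OF tr[OF True]])
      qed (simp add: rho_def root_tuple_def)
    qed
  qed
  moreover have "\<And>w n. w \<in> L n \<Longrightarrow> md w = n"
  proof -
    fix w n assume "w \<in> L n"
    then have w: "w \<in> VP" "\<forall>j<d. dp j (w j) = n" by (auto simp: L_def)
    then show "md w = n" using md_props(1)[OF w(1)] by auto
  qed
  ultimately show ?thesis unfolding Vr L_def by blast
qed

lemma L_Vr: "L n \<subseteq> Vr" using Vr_iff by blast

lemma L_unique: "w \<in> L n \<Longrightarrow> w \<in> L m \<Longrightarrow> n = m"
  using d0 by (auto simp: L_def)

lemma L0: "L 0 = {rt}"
proof
  show "L 0 \<subseteq> {rt}"
  proof
    fix w assume "w \<in> L 0"
    then have w: "w \<in> VP" "\<forall>j<d. dp j (w j) = 0" by (auto simp: L_def)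
    have "w = rt"
    proof (rule ext)
      fix j show "w j = rt j"
      proof (cases "j < d")
        case True
        then have "w j \<in> VV j" "dp j (w j) = 0" using w VP_iff by auto
        then have "w j = r j" using rtree.depth0[OF tr[OF True]] by blast
        then show ?thesis using True by (simp add: root_tuple_def)
      next
        case False
        then show ?thesis using w VP_iff by (simp add: root_tuple_def)
      qed
    qed
    then show "w \<in> {rt}" by simp
  qed
next
  have "\<forall>j<d. dp j (rt j) = 0"
  proof (intro allI impI)
    fix j assume j: "j < d"
    show "dp j (rt j) = 0" using rtree.depth0[OF tr[OF j]] rtree.r_in[OF tr[OF j]] j
      by (simp add: root_tuple_def)
  qed
  then show "{rt} \<subseteq> L 0" using rt_R by (auto simp: L_def RR_iff)
qed

lemma L_Suc: "ChiS F (L n) = L (Suc n)"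
proof
  show "ChiS F (L n) \<subseteq> L (Suc n)"
  proof
    fix w assume "w \<in> ChiS F (L n)"
    then obtain u where u: "u \<in> L n" "(u, w) \<in> Et" by (auto simp: ChiS_def induced_def)
    have "w \<in> VP" using u(2) Et_iff by blast
    moreover have "\<forall>j<d. dp j (w j) = Suc n"
    proof (intro allI impI)
      fix j assume j: "j < d"
      show "dp j (w j) = Suc n" using edge_dp[OF u(2) j] u(1) j by (simp add: L_def)
    qed
    ultimately show "w \<in> L (Suc n)" by (simp add: L_def)
  qed
next
  show "L (Suc n) \<subseteq> ChiS F (L n)"
  proof
    fix w assume w: "w \<in> L (Suc n)"
    then have wV: "w \<in> VP" and wd: "\<forall>j<d. dp j (w j) = Suc n" by (auto simp: L_def)
    have "w \<notin> RR"
    proof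
      assume "w \<in> RR" then obtain j where "j < d" "w j = r j" using RR_iff by blast
      then show False using wd rtree.depth0[OF tr] rtree.r_in[OF tr] by fastforce
    qed
    then have e: "(tp w, w) \<in> Et" using tp_edge wV by blast
    have "tp w \<in> VP" using e Et_iff by blast
    moreover have "\<forall>j<d. dp j (tp w j) = n"
    proof (intro allI impI)
      fix j assume j: "j < d"
      show "dp j (tp w j) = n" using edge_dp[OF e j] wd j by simp
    qed
    ultimately have "tp w \<in> L n" by (simp add: L_def)
    moreover have "(tp w, w) \<in> F" using e L_Vr w \<open>tp w \<in> L n\<close> by (auto simp: induced_def)
    ultimately show "w \<in> ChiS F (L n)" by (auto simp: ChiS_def)
  qed
qed

lemma levF: "(ChiS F ^^ n) {rt} = L n"
  by (induction n) (simp_all add: L0 L_Suc)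

lemma depthF: assumes "w \<in> L n" shows "depth F rt w = n"
  unfolding depth_def levF
proof (rule the_equality)
  show "w \<in> L n" by fact
  fix m assume "w \<in> L m" then show "m = n" using assms L_unique by blast
qed

lemma L_point: assumes "x \<in> lev (EE j) (r j) n" "j < d"
  shows "restrict (\<lambda>k. if k = j then x else SOME y. y \<in> lev (EE k) (r k) n) {..<d} \<in> L n"
    (is "?w \<in> L n")
proof -
  have s: "\<And>k. k < d \<Longrightarrow> (SOME y. y \<in> lev (EE k) (r k) n) \<in> lev (EE k) (r k) n"
  proof -
    fix k assume "k < d"
    then obtain y where "y \<in> lev (EE k) (r k) n" using rtree.lev_ne[OF tr] by blast
    then show "(SOME y. y \<in> lev (EE k) (r k) n) \<in> lev (EE k) (r k) n" by (rule someI)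
  qed
  have W: "\<And>k. k < d \<Longrightarrow> ?w k \<in> lev (EE k) (r k) n"
    using assms s by auto
  have "\<forall>k<d. ?w k \<in> VV k" using W rtree.lev_sub[OF tr] by blast
  moreover have "\<forall>k<d. dp k (?w k) = n" using W rtree.depth_eq[OF tr] by blast
  moreover have "\<forall>k. k \<ge> d \<longrightarrow> ?w k = undefined" by simp
  ultimately show ?thesis unfolding L_def VP_iff by blast
qed

lemma item10: "\<forall>v\<in>VP. \<exists>w\<in>Vr. (\<Sum>j<d. dp j (v j)) = depth F rt w"
proof
  fix v assume "v \<in> VP"
  let ?n = "\<Sum>j<d. dp j (v j)"
  obtain x where "x \<in> lev (EE 0) (r 0) ?n" using rtree.lev_ne[OF tr[OF d0]] by blast
  then have "restrict (\<lambda>k. if k = 0 then x else SOME y. y \<in> lev (EE k) (r k) ?n) {..<d} \<in> L ?n"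
    using L_point d0 by blast
  then show "\<exists>w\<in>Vr. ?n = depth F rt w" using L_Vr[of ?n] depthF[symmetric] by blast
qed

lemma ChiF: assumes "w \<in> Vr" shows "Chi F w = Chi Et w"
proof -
  obtain n where n: "w \<in> L n" using Vr_iff assms by blast
  have sub: "Chi Et w \<subseteq> Vr"
  proof
    fix y assume "y \<in> Chi Et w"
    then have e: "(w,y) \<in> Et" by (simp add: Chi_def)
    have "y \<in> VP" using e Et_iff by blast
    moreover have "\<forall>j<d. dp j (y j) = Suc n"
    proof (intro allI impI)
      fix j assume j: "j < d"
      show "dp j (y j) = Suc n" using edge_dp[OF e j] n j by (simp add: L_def)
    qed
    ultimately have "y \<in> L (Suc n)" by (simp add: L_def)
    then show "y \<in> Vr" using L_Vr by blast
  qed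
  show ?thesis
  proof (rule set_eqI)
    fix y show "y \<in> Chi F w \<longleftrightarrow> y \<in> Chi Et w"
      using sub assms unfolding Chi_def induced_def by blast
  qed
qed

lemma branchesEt: assumes "w \<in> VP" shows "branches Et w \<longleftrightarrow> (\<exists>j<d. branches (EE j) (w j))"
proof
  assume "branches Et w"
  then obtain x y where xy: "x \<in> Chi Et w" "y \<in> Chi Et w" "x \<noteq> y" unfolding branches_def by blast
  have xP: "x \<in> PiE {..<d} (\<lambda>j. Chi (EE j) (w j))" and yP: "y \<in> PiE {..<d} (\<lambda>j. Chi (EE j) (w j))"
    using xy Chi_Et[OF assms] by auto
  obtain j where j: "x j \<noteq> y j" using xy(3) by (auto simp: fun_eq_iff)
  have jd: "j < d"
  proof (rule ccontr)
    assume "\<not> j < d"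
    then have "x j = undefined" "y j = undefined" using xP yP by (auto simp: PiE_def extensional_def)
    then show False using j by simp
  qed
  have "x j \<in> Chi (EE j) (w j)" "y j \<in> Chi (EE j) (w j)" using xP yP jd by (auto simp: PiE_def Pi_def)
  then show "\<exists>j<d. branches (EE j) (w j)" using jd j unfolding branches_def by blast
next
  assume "\<exists>j<d. branches (EE j) (w j)"
  then obtain j x y where j: "j < d" "x \<in> Chi (EE j) (w j)" "y \<in> Chi (EE j) (w j)" "x \<noteq> y"
    unfolding branches_def by blast
  obtain b where b: "b \<in> Chi Et w" using Chi_ne[OF assms] by blast
  then have bP: "b \<in> PiE {..<d} (\<lambda>j. Chi (EE j) (w j))" using Chi_Et[OF assms] by auto
  have "b(j := x) \<in> PiE {..<d} (\<lambda>j. Chi (EE j) (w j))" "b(j := y) \<in> PiE {..<d} (\<lambda>j. Chi (EE j) (w j))"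
    using bP j by (auto simp: PiE_def extensional_def Pi_def)
  moreover have "b(j := x) \<noteq> b(j := y)" using j(4) by (metis fun_upd_same)
  ultimately show "branches Et w" unfolding branches_def Chi_Et[OF assms] by blast
qed

lemma item9: "branching_index Vr F rt = Max ((\<lambda>j. branching_index (VV j) (EE j) (r j)) ` {..<d})"
proof -
  define T where "T j = {enat (dp j x) | x. x \<in> VV j \<and> branches (EE j) x}" for j
  define S where "S = {enat (depth F rt w) | w. w \<in> Vr \<and> branches F w}"
  have bF: "branches F w \<longleftrightarrow> (\<exists>j<d. branches (EE j) (w j))" if w: "w \<in> Vr" for w
  proof -
    obtain n where "w \<in> L n" using Vr_iff w by blast
    then have wV: "w \<in> VP" by (simp add: L_def)
    have "branches F w \<longleftrightarrow> branches Et w" unfolding branches_def using ChiF[OF w] by simp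
    then show ?thesis using branchesEt[OF wV] by simp
  qed
  have SU: "S = (\<Union>j\<in>{..<d}. T j)"
  proof
    show "S \<subseteq> (\<Union>j\<in>{..<d}. T j)"
    proof
      fix e assume "e \<in> S"
      then obtain w where w: "e = enat (depth F rt w)" "w \<in> Vr" "branches F w" unfolding S_def by blast
      then obtain n where n: "w \<in> L n" using Vr_iff by blast
      obtain j where j: "j < d" "branches (EE j) (w j)" using bF w by blast
      have "w j \<in> VV j" "dp j (w j) = n" using n j by (auto simp: L_def VP_iff)
      moreover have "e = enat n" using w depthF[OF n] by simp
      ultimately have "e \<in> T j" using j unfolding T_def by blast
      then show "e \<in> (\<Union>j\<in>{..<d}. T j)" using j by blast
    qed
  next
    show "(\<Union>j\<in>{..<d}. T j) \<subseteq> S"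
    proof
      fix e assume "e \<in> (\<Union>j\<in>{..<d}. T j)"
      then obtain j x where jx: "j < d" "x \<in> VV j" "branches (EE j) x" "e = enat (dp j x)"
        unfolding T_def by blast
      let ?n = "dp j x"
      let ?w = "restrict (\<lambda>k. if k = j then x else SOME y. y \<in> lev (EE k) (r k) ?n) {..<d}"
      have "x \<in> lev (EE j) (r j) ?n" using rtree.depth_lev[OF tr[OF jx(1)] jx(2)] .
      then have wL: "?w \<in> L ?n" using L_point jx(1) by blast
      then have wVr: "?w \<in> Vr" using L_Vr by blast
      have "?w j = x" using jx(1) by simp
      then have "branches F ?w" using bF[OF wVr] jx by auto
      moreover have "e = enat (depth F rt ?w)" using depthF[OF wL] jx(4) by simp
      ultimately show "e \<in> S" using wVr unfolding S_def by blast
    qed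
  qed
  have ex: "(\<exists>w\<in>Vr. branches F w) \<longleftrightarrow> S \<noteq> {}" unfolding S_def by blast
  have BIF: "branching_index Vr F rt = (if S \<noteq> {} then eSuc (Sup S) else 0)"
    unfolding branching_index_def S_def[symmetric] ex ..
  have BIj: "branching_index (VV j) (EE j) (r j) = (if T j \<noteq> {} then eSuc (Sup (T j)) else 0)" for j
  proof -
    have "(\<exists>x\<in>VV j. branches (EE j) x) \<longleftrightarrow> T j \<noteq> {}" unfolding T_def by blast
    then show ?thesis unfolding branching_index_def T_def[symmetric] by simp
  qed
  show ?thesis unfolding BIF BIj SU using d0 by (intro enat_max_lemma) auto
qed

end


theorem mainTheorem10:
  fixes d :: nat and VV :: "nat \<Rightarrow> 'a set" and EE :: "nat \<Rightarrow> ('a \<times> 'a) set"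
    and r :: "nat \<Rightarrow> 'a"
  assumes d: "d \<ge> 1"
    and trees: "\<And>j. j < d \<Longrightarrow> rooted_tree (VV j) (EE j) (r j) \<and> leafless (VV j) (EE j)"
  defines "V \<equiv> prodV d VV"
    and "Et \<equiv> tensorE d VV EE"
    and "Ec \<equiv> cartE d VV EE"
    and "R \<equiv> RootT d VV r"
    and "rt \<equiv> root_tuple d r"
    and "Vr \<equiv> comp_of (prodV d VV) (tensorE d VV EE) (root_tuple d r)"
    and "F \<equiv> induced (tensorE d VV EE) (comp_of (prodV d VV) (tensorE d VV EE) (root_tuple d r))"
  shows
    "(\<forall>v\<in>R. \<not> (\<exists>u\<in>V. (u, v) \<in> Et))
   \<and> (\<forall>v\<in>V - R. \<exists>!u. u \<in> V \<and> (u, v) \<in> Et)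
   \<and> \<not> has_circuit Et
   \<and> (\<forall>u\<in>R. \<forall>w\<in>R. u \<noteq> w \<longrightarrow> \<not> path_joins V Et u w)
   \<and> (\<exists>f. bij_betw f (components V Et) R)
   \<and> ((\<forall>j<d. countable (VV j)) \<longrightarrow> countable (components V Et))
   \<and> (\<forall>C\<in>components V Et. \<exists>q\<in>R \<inter> C. rooted_tree C (induced Et C) q)
   \<and> (locally_finite V Et \<longleftrightarrow> locally_finite V Ec)
   \<and> leafless V Et
   \<and> ((\<forall>j<d. branching_index (VV j) (EE j) (r j) \<noteq> \<infinity>) \<longrightarrow>
        branching_index Vr F rt = Max ((\<lambda>j. branching_index (VV j) (EE j) (r j)) ` {..<d}))
   \<and> (\<forall>v\<in>V. \<exists>w\<in>Vr. (\<Sum>j<d. depth (EE j) (r j) (v j)) = depth F rt w)"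
proof -
  have P: "prodtree d VV EE r" using d trees by (simp add: prodtree_def)
  show ?thesis unfolding V_def Et_def Ec_def R_def rt_def Vr_def F_def
  proof (intro conjI)
    show "\<forall>v\<in>RootT d VV r. \<not> (\<exists>u\<in>prodV d VV. (u, v) \<in> tensorE d VV EE)"
      using prodtree.item1[OF P] by blast
    show "\<forall>v\<in>prodV d VV - RootT d VV r. \<exists>!u. u \<in> prodV d VV \<and> (u, v) \<in> tensorE d VV EE"
      using prodtree.item2[OF P] by blast
    show "\<not> has_circuit (tensorE d VV EE)" using prodtree.item3[OF P] .
    show "\<forall>u\<in>RootT d VV r. \<forall>w\<in>RootT d VV r. u \<noteq> w \<longrightarrow> \<not> path_joins (prodV d VV) (tensorE d VV EE) u w"
      using prodtree.item4[OF P] by blast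
    show "\<exists>f. bij_betw f (components (prodV d VV) (tensorE d VV EE)) (RootT d VV r)"
      using prodtree.item5[OF P] .
    show "(\<forall>j<d. countable (VV j)) \<longrightarrow> countable (components (prodV d VV) (tensorE d VV EE))"
      using prodtree.item5b[OF P] .
    show "\<forall>C\<in>components (prodV d VV) (tensorE d VV EE). \<exists>q\<in>RootT d VV r \<inter> C. rooted_tree C (induced (tensorE d VV EE) C) q"
      using prodtree.item6[OF P] by blast
    show "locally_finite (prodV d VV) (tensorE d VV EE) = locally_finite (prodV d VV) (cartE d VV EE)"
      using prodtree.item7[OF P] .
    show "leafless (prodV d VV) (tensorE d VV EE)" using prodtree.item8[OF P] .
  qed (use prodtree.item9[OF P] prodtree.item10[OF P] in auto)
qed

end
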